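(* The language $L_2=\{\,a^{2^n} b^{n} c^{2^n+n} \mid n \ge 1\,\}$ belongs to $\mathscr{L}_{rt}(\mathrm{MC\text{-}OCA}(1))$.
   Context: A cellular automaton (CA) is a system $\langle S,F,A,B,\#,b_l,b_r,\delta\rangle$ with finite nonempty state set $S$, accepting states $F\subseteq S$, nonempty input alphabet $A\subseteq S$, set $B$ of communication symbols, boundary symbol $\#\notin B$, communication functions $b_l,b_r:S\to B\cup\{\bot\}$ ($\bot$ means nothing is sent), and local transition function $\delta:(B\cup\{\#,\bot\})\times S\times(B\cup\{\#,\bot\})\to S$. On input $w=a_1\cdots a_n$ the cells $1,\dots,n$ start in $c_0(i)=a_i$ and update synchronously by $c_{t+1}(i)=\delta(b_r(c_t(i-1)),c_t(i),b_l(c_t(i+1)))$; the outer cells receive $\#$ on their free side at the first step and $\bot$ afterwards. Acceptance: the leftmost cell enters an accepting state at some time. Time complexity $t$: every accepted $w$ is accepted within $t(|w|)$ steps; real time: $t(n)=n$. A one-way CA (OCA) has $b_r\equiv\bot$ and the leftmost cell gets no boundary symbol. $\mathrm{com}(i,t)$ is the number of steps $j<t$ with $b_r(c_j(i))\ne\bot$ or $b_l(c_j(i+1))\ne\bot$; $\mathrm{mcom}(w)=\max_i \mathrm{com}(i,t(|w|))$. $\mathrm{MC\text{-}OCA}(f)$ denotes OCAs such that every accepted $w$ is accepted with $\mathrm{mcom}(w)\le g(|w|)$ for some $g\in O(f)$; $\mathscr{L}_{rt}(X)$ is the family of languages accepted by real-time devices of type $X$. *)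

theory Defs
  imports Main "HOL-Library.Landau_Symbols"
begin

text \<open>Values a cell can receive from a neighbour: the boundary symbol #,
  nothing (bottom), or a communication symbol.\<close>
datatype 'b rcv = Bnd | Bot | Msg 'b

text \<open>A cellular automaton <S,F,A,B,#,b_l,b_r,delta>; the communication
  functions return None for bottom (nothing sent).\<close>
record ('s, 'b) ca =
  St  :: "'s set"
  Acc :: "'s set"
  Inp :: "'s set"
  Com :: "'b set"
  bl  :: "'s \<Rightarrow> 'b option"
  br  :: "'s \<Rightarrow> 'b option"
  dlt :: "'b rcv \<Rightarrow> 's \<Rightarrow> 'b rcv \<Rightarrow> 's"

definition adm :: "'b set \<Rightarrow> 'b rcv \<Rightarrow> bool" where
  "adm B x \<longleftrightarrow> (\<forall>m. x = Msg m \<longrightarrow> m \<in> B)"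

definition wf_ca :: "('s, 'b) ca \<Rightarrow> bool" where
  "wf_ca M \<longleftrightarrow> finite (St M) \<and> St M \<noteq> {} \<and> Acc M \<subseteq> St M \<and>
     Inp M \<subseteq> St M \<and> Inp M \<noteq> {} \<and>
     (\<forall>s \<in> St M. set_option (bl M s) \<subseteq> Com M \<and> set_option (br M s) \<subseteq> Com M) \<and>
     (\<forall>x s y. adm (Com M) x \<longrightarrow> s \<in> St M \<longrightarrow> adm (Com M) y \<longrightarrow> dlt M x s y \<in> St M)"

definition is_oca :: "('s, 'b) ca \<Rightarrow> bool" where
  "is_oca M \<longleftrightarrow> wf_ca M \<and> (\<forall>s \<in> St M. br M s = None)"

definition to_rcv :: "'b option \<Rightarrow> 'b rcv" where
  "to_rcv x = (case x of None \<Rightarrow> Bot | Some m \<Rightarrow> Msg m)"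

text \<open>Configuration at time t on input w (cells 1..length w).
  Flag ow = True: one-way CA, the leftmost cell never gets the boundary symbol.\<close>
fun conf :: "bool \<Rightarrow> ('s, 'b) ca \<Rightarrow> 's list \<Rightarrow> nat \<Rightarrow> nat \<Rightarrow> 's" where
  "conf ow M w 0 = (\<lambda>i. w ! (i - 1))"
| "conf ow M w (Suc t) = (\<lambda>i.
     dlt M
       (if i = 1 then (if t = 0 \<and> \<not> ow then Bnd else Bot)
        else to_rcv (br M (conf ow M w t (i - 1))))
       (conf ow M w t i)
       (if i = length w then (if t = 0 then Bnd else Bot)
        else to_rcv (bl M (conf ow M w t (i + 1)))))"

definition accepts_within :: "bool \<Rightarrow> ('s, 'b) ca \<Rightarrow> 's list \<Rightarrow> nat \<Rightarrow> bool" where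
  "accepts_within ow M w T \<longleftrightarrow> w \<noteq> [] \<and> set w \<subseteq> Inp M \<and>
     (\<exists>t \<le> T. conf ow M w t 1 \<in> Acc M)"

definition lang :: "bool \<Rightarrow> ('s, 'b) ca \<Rightarrow> 's list set" where
  "lang ow M = {w. w \<noteq> [] \<and> set w \<subseteq> Inp M \<and> (\<exists>t. conf ow M w t 1 \<in> Acc M)}"

definition com :: "bool \<Rightarrow> ('s, 'b) ca \<Rightarrow> 's list \<Rightarrow> nat \<Rightarrow> nat \<Rightarrow> nat" where
  "com ow M w i t = card {j. j < t \<and>
      (br M (conf ow M w j i) \<noteq> None \<or> bl M (conf ow M w j (i + 1)) \<noteq> None)}"

definition rt_mc_oca_const :: "('s, 'b) ca \<Rightarrow> 's list set \<Rightarrow> bool" where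
  "rt_mc_oca_const M L \<longleftrightarrow> is_oca M \<and> lang True M = L \<and>
     (\<forall>w \<in> L. accepts_within True M w (length w)) \<and>
     (\<exists>g :: nat \<Rightarrow> real. g \<in> O(\<lambda>_. 1) \<and>
        (\<forall>w \<in> L. \<forall>i \<in> {1..<length w}. real (com True M w i (length w)) \<le> g (length w)))"

datatype abc = a | b | c

definition L2 :: "abc list set" where
  "L2 = {replicate (2 ^ n) a @ replicate n b @ replicate (2 ^ n + n) c | n. n \<ge> 1}"

end

theory Submission imports Defs "HOL-Library.Countable" begin

datatype sst = NY | K0 | K1 | K2 | K3 | Dn

fun adv :: "sst \<Rightarrow> bool \<Rightarrow> sst" where
  "adv NY r = (if r then K0 else NY)"
| "adv K0 r = K1" | "adv K1 r = K2" | "adv K2 r = K3" | "adv K3 r = Dn" | "adv Dn r = Dn"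

definition sstT :: "nat option \<Rightarrow> nat \<Rightarrow> sst" where
  "sstT T t = (case T of None \<Rightarrow> NY | Some T0 \<Rightarrow>
     (if t < T0 then NY else if t = T0 then K0 else if t = Suc T0 then K1
      else if t = Suc (Suc T0) then K2 else if t = Suc (Suc (Suc T0)) then K3 else Dn))"

lemma sstT_None[simp]: "sstT None t = NY" by (simp add: sstT_def)
lemma sstT_K0[simp]: "sstT (Some T) t = K0 \<longleftrightarrow> t = T" by (auto simp: sstT_def)
lemma sstT_K1[simp]: "sstT (Some T) t = K1 \<longleftrightarrow> t = Suc T" by (auto simp: sstT_def)
lemma sstT_K2[simp]: "sstT (Some T) t = K2 \<longleftrightarrow> t = Suc (Suc T)" by (auto simp: sstT_def)
lemma sstT_K3[simp]: "sstT (Some T) t = K3 \<longleftrightarrow> t = Suc (Suc (Suc T))" by (auto simp: sstT_def)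

lemma adv_sstT: assumes "t < T \<Longrightarrow> rr = (Suc t = T)"
  shows "adv (sstT (Some T) t) rr = sstT (Some T) (Suc t)"
  using assms by (auto simp: sstT_def)

lemma adv_None: "adv (sstT None t) False = sstT None (Suc t)" by simp

definition pow2 :: "nat \<Rightarrow> bool" where "pow2 n = (\<exists>k. n = 2^k)"

lemma ex_log: "1 \<le> (n::nat) \<Longrightarrow> \<exists>k. 2^k \<le> n \<and> n < 2^Suc k"
proof (induction n)
  case 0 then show ?case by simp
next
  case (Suc n)
  show ?case
  proof (cases "n = 0")
    case True then show ?thesis by (intro exI[of _ 0]) simp
  next
    case False
    then obtain k where k: "2^k \<le> n" "n < 2^Suc k" using Suc by auto
    show ?thesis
    proof (cases "Suc n < 2^Suc k")
      case True then show ?thesis using k by (intro exI[of _ k]) simp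
    next
      case False
      then have "Suc n = 2^Suc k" using k by simp
      then show ?thesis by (intro exI[of _ "Suc k"]) simp
    qed
  qed
qed

lemma log_uniq: assumes "2^k \<le> (n::nat)" "n < 2^Suc k" "2^j \<le> n" "n < 2^Suc j" shows "k = j"
proof (rule ccontr)
  assume "k \<noteq> j"
  then consider "Suc k \<le> j" | "Suc j \<le> k" by linarith
  then show False
  proof cases
    case 1 then have "(2::nat)^Suc k \<le> 2^j" by (rule power_increasing) simp
    then show False using assms by linarith
  next
    case 2 then have "(2::nat)^Suc j \<le> 2^k" by (rule power_increasing) simp
    then show False using assms by linarith
  qed
qed

definition hp :: "nat \<Rightarrow> nat" where
  "hp n = 2 ^ (SOME k. 2^k \<le> n \<and> n < 2^Suc k)"

lemma hp_eq: assumes "2^k \<le> n" "n < 2^Suc k" shows "hp n = 2^k"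
proof -
  have "2^(SOME k. 2^k \<le> n \<and> n < 2^Suc k) \<le> n \<and> n < 2^Suc (SOME k. 2^k \<le> n \<and> n < 2^Suc k)"
    using assms by (intro someI[where P="\<lambda>k. 2^k \<le> n \<and> n < 2^Suc k"]) simp
  then have "(SOME k. 2^k \<le> n \<and> n < 2^Suc k) = k" using log_uniq assms by blast
  then show ?thesis by (simp add: hp_def)
qed

lemma hp_pow: "hp (2^k) = 2^k" by (rule hp_eq) auto

lemma hp_bounds: "1 \<le> n \<Longrightarrow> hp n \<le> n \<and> n < 2 * hp n"
  using ex_log hp_eq by fastforce

lemma hp_pred_pow: "1 \<le> k \<Longrightarrow> hp (2^k - 1) = 2^(k-1)"
proof -
  assume k: "1 \<le> k"
  then obtain j where j: "k = Suc j" by (cases k) auto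
  have "(2::nat)^j \<le> 2^Suc j - 1"
    by simp
  moreover have "(2::nat)^Suc j - 1 < 2^Suc j" by simp
  ultimately show ?thesis using j hp_eq by simp
qed

lemma hp_pred_npow: assumes "2 \<le> n" "\<not> pow2 n" shows "hp (n - 1) = hp n"
proof -
  have "1 \<le> n" using assms by simp
  then obtain k where k: "2^k \<le> n" "n < 2^Suc k" using ex_log by blast
  have "2^k \<noteq> n" using assms(2) by (auto simp: pow2_def)
  then have "2^k \<le> n - 1" "n - 1 < 2^Suc k" using k by auto
  then show ?thesis using hp_eq[of k "n-1"] hp_eq[OF k] by simp
qed

lemma hp_pow2: "1 \<le> n \<Longrightarrow> pow2 (hp n)"
proof -
  assume "1 \<le> n"
  then obtain k where "2^k \<le> n" "n < 2^Suc k" using ex_log by blast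
  then have "hp n = 2^k" by (rule hp_eq)
  then show ?thesis unfolding pow2_def by blast
qed

definition cnt :: "nat \<Rightarrow> nat" where "cnt n = card {j. (2::nat)^j < n}"

lemma cnt_fin: "finite {j. (2::nat)^j < n}"
proof -
  have "{j. (2::nat)^j < n} \<subseteq> {..<n}"
  proof
    fix j assume "j \<in> {j. (2::nat)^j < n}"
    then have h: "(2::nat)^j < n" by simp
    have "j < (2::nat)^j" by (rule less_exp)
    then have "j < n" using h by (rule less_trans)
    then show "j \<in> {..<n}" by simp
  qed
  then show ?thesis using finite_subset by blast
qed

lemma cnt_Suc: "cnt (Suc n) = cnt n + (if pow2 n then 1 else 0)"
proof (cases "pow2 n")
  case True
  then obtain k where k: "n = 2^k" by (auto simp: pow2_def)
  have "{j. (2::nat)^j < Suc n} = insert k {j. (2::nat)^j < n}" using k by (auto simp: less_Suc_eq)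
  moreover have "k \<notin> {j. (2::nat)^j < n}" using k by simp
  ultimately show ?thesis using True cnt_fin by (simp add: cnt_def)
next
  case False
  have "{j. (2::nat)^j < Suc n} = {j. (2::nat)^j < n}"
    using False by (auto simp: pow2_def less_Suc_eq)
  then show ?thesis using False by (simp add: cnt_def)
qed

lemma cnt_pow: "cnt (2^k) = k"
proof -
  have "{j. (2::nat)^j < 2^k} = {..<k}" by auto
  then show ?thesis by (simp add: cnt_def)
qed

lemma pow2_one[simp]: "pow2 (Suc 0)" by (auto simp: pow2_def intro: exI[of _ 0])

lemma cnt_one[simp]: "cnt (Suc 0) = 0"
  using cnt_Suc[of 0] by (simp add: cnt_def pow2_def)

definition Stm :: "nat \<Rightarrow> nat \<Rightarrow> nat \<Rightarrow> nat option" where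
  "Stm p q x = Some (if x \<le> p+q then 2*(p+q+1-x) else 0)"
definition L1m :: "nat \<Rightarrow> nat \<Rightarrow> nat \<Rightarrow> nat option" where
  "L1m p q x = (if x \<le> p then Some (2*(p+1-x)) else if x \<le> p+q then Some 0 else None)"
definition L2m :: "nat \<Rightarrow> nat \<Rightarrow> nat \<Rightarrow> nat option" where
  "L2m p q x = (if x \<le> p then Some (3*(p+1-x)) else if x \<le> p+q then Some 0 else None)"
definition Dm :: "nat \<Rightarrow> nat \<Rightarrow> nat \<Rightarrow> nat option" where
  "Dm p q x = (if x \<le> p then Some (2*(p+1-x) + 2*cnt (p+1-x)) else if x \<le> p+q then Some 0 else None)"
definition mkC :: "nat \<Rightarrow> nat \<Rightarrow> nat \<Rightarrow> bool" where
  "mkC p x t = (x \<le> p \<and> pow2 (p+1-x) \<and> (if x = p then 1 \<le> t else 2*(p+1-x) \<le> t))"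
definition fC :: "nat \<Rightarrow> nat \<Rightarrow> nat \<Rightarrow> bool" where
  "fC p x t = (x \<le> p \<and> t = 2 * hp (p+1-x) + (p+1-x))"

lemma ss_step: "adv (sstT (Stm p q x) t) (sstT (Stm p q (Suc x)) t = K1) = sstT (Stm p q x) (Suc t)"
  unfolding Stm_def by (rule adv_sstT) (auto split: if_splits)

lemma ss_last: "p + q < x \<Longrightarrow> adv (sstT (Stm p q x) t) False = sstT (Stm p q x) (Suc t)"
  unfolding Stm_def by (rule adv_sstT) auto

lemma l1_step: "1 \<le> q \<Longrightarrow> adv (sstT (L1m p q x) t) (sstT (L1m p q (Suc x)) t = K1) = sstT (L1m p q x) (Suc t)"
  by (cases "x \<le> p+q") (auto simp: L1m_def intro!: adv_sstT)

lemma l1_last: "p + q < x \<Longrightarrow> adv (sstT (L1m p q x) t) False = sstT (L1m p q x) (Suc t)"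
  by (simp add: L1m_def)

lemma l2_step: "1 \<le> q \<Longrightarrow> adv (sstT (L2m p q x) t) (sstT (L2m p q (Suc x)) t = K2) = sstT (L2m p q x) (Suc t)"
  by (cases "x \<le> p+q") (auto simp: L2m_def intro!: adv_sstT)

lemma l2_last: "p + q < x \<Longrightarrow> adv (sstT (L2m p q x) t) False = sstT (L2m p q x) (Suc t)"
  by (simp add: L2m_def)

lemma dd_step: assumes q: "1 \<le> q" and x: "1 \<le> x"
  shows "adv (sstT (Dm p q x) t)
     ((sstT (Dm p q (Suc x)) t = K1 \<and> \<not> mkC p (Suc x) t) \<or> (sstT (Dm p q (Suc x)) t = K3 \<and> mkC p (Suc x) t))
   = sstT (Dm p q x) (Suc t)"
proof (cases "x \<le> p")
  case True
  show ?thesis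
  proof (cases "x = p")
    case True
    then show ?thesis using q by (auto simp: Dm_def mkC_def intro!: adv_sstT)
  next
    case False
    with True have xp: "x < p" by simp
    define U where "U = p - x"
    have U1: "1 \<le> U" using xp U_def by simp
    have e1: "p + 1 - Suc x = U" using U_def xp by simp
    have e2: "p + 1 - x = Suc U" using U_def xp by simp
    define D' where "D' = 2*U + 2*cnt U"
    have Dx1: "Dm p q (Suc x) = Some D'" using xp e1 by (simp add: Dm_def D'_def)
    have Dx: "Dm p q x = Some (D' + 2 + (if pow2 U then 2 else 0))"
      using xp e2 by (simp add: Dm_def D'_def cnt_Suc)
    have mkx1: "\<And>t. D' < t \<Longrightarrow> mkC p (Suc x) t = pow2 U"
      using xp e1 D'_def by (auto simp: mkC_def)
    show ?thesis unfolding Dx Dx1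
      by (rule adv_sstT) (auto simp: mkx1)
  qed
next
  case False
  then show ?thesis
  proof (cases "x \<le> p+q")
    case True then show ?thesis using False by (auto simp: Dm_def intro!: adv_sstT)
  next
    case False2: False
    then show ?thesis using False by (simp add: Dm_def mkC_def)
  qed
qed

lemma dd_last: "p + q < x \<Longrightarrow> adv (sstT (Dm p q x) t) False = sstT (Dm p q x) (Suc t)"
  by (simp add: Dm_def)

lemma mk_step: assumes q: "1 \<le> q" and x: "1 \<le> x"
  shows "(mkC p x t \<or> (x \<le> p \<and> t = 0 \<and> p < Suc x \<and> Suc x \<le> p+q) \<or>
          (fC p (Suc x) t \<and> sstT (L1m p q (Suc x)) t = K1)) = mkC p x (Suc t)"
proof (cases "x < p")
  case True
  define U where "U = p - x"
  have U1: "1 \<le> U" using True U_def by simp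
  have e1: "p + 1 - Suc x = U" using U_def True by simp
  have e2: "p + 1 - x = Suc U" using U_def True by simp
  have key: "(2 * hp U + U = Suc (2 * U)) = pow2 (Suc U)"
  proof
    assume h: "2 * hp U + U = Suc (2 * U)"
    then have "Suc U = 2 * hp U" by simp
    moreover obtain k where "hp U = 2^k" using hp_pow2[OF U1] by (auto simp: pow2_def)
    ultimately have "Suc U = 2 ^ Suc k" by simp
    then show "pow2 (Suc U)" unfolding pow2_def by blast
  next
    assume "pow2 (Suc U)"
    then obtain k where k: "Suc U = 2^k" by (auto simp: pow2_def)
    then have "k \<noteq> 0" using U1 by (cases k) auto
    then obtain j where j: "k = Suc j" by (cases k) auto
    have "hp (2^Suc j - 1) = 2^j" using hp_pred_pow[of "Suc j"] by simp
    moreover have "U = 2^Suc j - 1" using k j by simp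
    ultimately have "hp U = 2^j" by simp
    then have "2 * hp U = Suc U" using k j by simp
    then show "2 * hp U + U = Suc (2 * U)" by simp
  qed
  have xp: "x \<noteq> p" "x \<le> p" "Suc x \<le> p" using True by auto
  have m1: "mkC p x t = (pow2 (Suc U) \<and> 2 * Suc U \<le> t)" unfolding mkC_def using xp e2 by simp
  have m2: "mkC p x (Suc t) = (pow2 (Suc U) \<and> 2 * Suc U \<le> Suc t)" unfolding mkC_def using xp e2 by simp
  have f1: "fC p (Suc x) t = (t = 2 * hp U + U)" unfolding fC_def using xp e1 by simp
  have l1: "(sstT (L1m p q (Suc x)) t = K1) = (t = Suc (2 * U))" unfolding L1m_def using xp e1 by simp
  have mid: "\<not> (x \<le> p \<and> t = 0 \<and> p < Suc x \<and> Suc x \<le> p+q)" using True by simp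
  show ?thesis unfolding m1 m2 f1 l1 using mid key by (cases "t = Suc (2 * U)") auto
next
  case False
  show ?thesis
  proof (cases "x = p")
    case True
    have m1: "mkC p x t = (1 \<le> t)" "mkC p x (Suc t)" unfolding mkC_def using True by auto
    have mid: "(x \<le> p \<and> t = 0 \<and> p < Suc x \<and> Suc x \<le> p+q) = (t = 0)" using True q by simp
    show ?thesis using m1 mid by auto
  next
    case False2: False
    then have "p < x" using False by simp
    then have m: "\<not> mkC p x t" "\<not> mkC p x (Suc t)" "\<not> fC p (Suc x) t" unfolding mkC_def fC_def by auto
    show ?thesis using m \<open>p < x\<close> by auto
  qed
qed

lemma mk_last: "p + q < x \<Longrightarrow> mkC p x t = mkC p x (Suc t)"
  by (simp add: mkC_def)

lemma ff_step: assumes q: "1 \<le> q" and x: "1 \<le> x"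
  shows "((sstT (L2m p q (Suc x)) t = K2 \<and> mkC p x (Suc t)) \<or>
          (fC p (Suc x) t \<and> \<not> sstT (L1m p q (Suc x)) t = K1)) = fC p x (Suc t)"
proof (cases "x < p")
  case True
  define U where "U = p - x"
  have U1: "1 \<le> U" using True U_def by simp
  have e1: "p + 1 - Suc x = U" using U_def True by simp
  have e2: "p + 1 - x = Suc U" using U_def True by simp
  have xp: "x \<noteq> p" "x \<le> p" "Suc x \<le> p" using True by auto
  have m2: "mkC p x (Suc t) = (pow2 (Suc U) \<and> 2 * Suc U \<le> Suc t)" unfolding mkC_def using xp e2 by simp
  have f1: "fC p (Suc x) t = (t = 2 * hp U + U)" unfolding fC_def using xp e1 by simp
  have f2: "fC p x (Suc t) = (Suc t = 2 * hp (Suc U) + Suc U)" unfolding fC_def using xp e2 by simp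
  have l1: "(sstT (L1m p q (Suc x)) t = K1) = (t = Suc (2 * U))" unfolding L1m_def using xp e1 by simp
  have l2: "(sstT (L2m p q (Suc x)) t = K2) = (t = Suc (Suc (3 * U)))" unfolding L2m_def using xp e1 by simp
  show ?thesis
  proof (cases "pow2 (Suc U)")
    case True2: True
    then obtain k where k: "Suc U = 2^k" by (auto simp: pow2_def)
    then have "k \<noteq> 0" using U1 by (cases k) auto
    then obtain j where j: "k = Suc j" by (cases k) auto
    have "hp (2^Suc j - 1) = 2^j" using hp_pred_pow[of "Suc j"] by simp
    moreover have "U = 2^Suc j - 1" using k j by simp
    ultimately have "hp U = 2^j" by simp
    then have hU: "2 * hp U = Suc U" using k j by simp
    have hSU: "hp (Suc U) = Suc U" using k hp_pow by simp
    show ?thesis unfolding m2 f1 f2 l1 l2 hSU using True2 hU by auto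
  next
    case False2: False
    have "hp (Suc U - 1) = hp (Suc U)" using False2 U1 by (intro hp_pred_npow) auto
    then have hU: "hp U = hp (Suc U)" by simp
    have ne: "2 * hp U \<noteq> Suc U"
    proof
      assume h2: "2 * hp U = Suc U"
      obtain k where k: "hp U = 2^k" using hp_pow2[OF U1] unfolding pow2_def by blast
      from h2 have "Suc U = 2^Suc k" using k by simp
      then show False using False2 unfolding pow2_def by blast
    qed
    show ?thesis unfolding m2 f1 f2 l1 l2 hU[symmetric] using False2 ne by auto
  qed
next
  case False
  show ?thesis
  proof (cases "x = p")
    case True
    have h1: "hp 1 = 1" using hp_pow[of 0] by simp
    have m2: "mkC p x (Suc t)" unfolding mkC_def using True by auto
    have f1: "\<not> fC p (Suc x) t" unfolding fC_def using True by simp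
    have f2: "fC p x (Suc t) = (Suc t = 3)" unfolding fC_def using True h1 by simp
    have l2: "(sstT (L2m p q (Suc x)) t = K2) = (t = 2)" unfolding L2m_def using True q by (simp add: numeral_2_eq_2)
    show ?thesis unfolding f2 l2 using m2 f1 by auto
  next
    case False2: False
    then have "p < x" using False by simp
    then have m: "\<not> mkC p x (Suc t)" "\<not> fC p (Suc x) t" "\<not> fC p x (Suc t)" unfolding mkC_def fC_def by auto
    show ?thesis using m by auto
  qed
qed

lemma ff_last: "p + q < x \<Longrightarrow> \<not> fC p x (Suc t)"
  by (simp add: fC_def)

datatype cls = Cc | Bc | Ac | Bad
datatype frs = FN | FNow cls | FDn cls
datatype cst = CS (sy: abc) (t0: bool) (fr: frs) (ss: sst) (l1: sst) (l2: sst) (dd: sst) (mk: bool) (ff: bool)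
datatype msg = MS (msy: "abc option") (mfr: "cls option") (mss: bool) (ml1: bool) (ml2: bool) (mdd: bool) (mff: bool)

instance abc :: countable by countable_datatype
instance sst :: countable by countable_datatype
instance cls :: countable by countable_datatype
instance frs :: countable by countable_datatype
instance cst :: countable by countable_datatype
instance msg :: countable by countable_datatype

lemma UNIV_abc: "(UNIV::abc set) = {a,b,c}"
proof -
  have "x \<in> {a,b,c}" for x by (cases x) auto
  then show ?thesis by blast
qed
lemma UNIV_sst: "(UNIV::sst set) = {NY,K0,K1,K2,K3,Dn}"
proof -
  have "x \<in> {NY,K0,K1,K2,K3,Dn}" for x by (cases x) auto
  then show ?thesis by blast
qed
lemma UNIV_cls: "(UNIV::cls set) = {Cc,Bc,Ac,Bad}"
proof -
  have "x \<in> {Cc,Bc,Ac,Bad}" for x by (cases x) auto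
  then show ?thesis by blast
qed
instance abc :: finite by standard (simp add: UNIV_abc)
instance sst :: finite by standard (simp add: UNIV_sst)
instance cls :: finite by standard (simp add: UNIV_cls)
lemma UNIV_frs: "(UNIV::frs set) = insert FN (range FNow \<union> range FDn)"
proof -
  have "x \<in> insert FN (range FNow \<union> range FDn)" for x by (cases x) auto
  then show ?thesis by blast
qed
instance frs :: finite by standard (simp add: UNIV_frs)
lemma UNIV_cst: "(UNIV::cst set) = (\<lambda>(x1,x2,x3,x4,x5,x6,x7,x8,x9). CS x1 x2 x3 x4 x5 x6 x7 x8 x9) ` (UNIV :: (abc\<times>bool\<times>frs\<times>sst\<times>sst\<times>sst\<times>sst\<times>bool\<times>bool) set)"
proof (rule set_eqI, rule iffI)
  fix s :: cst
  show "s \<in> (\<lambda>(x1,x2,x3,x4,x5,x6,x7,x8,x9). CS x1 x2 x3 x4 x5 x6 x7 x8 x9) ` UNIV"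
    by (rule image_eqI[where x="(sy s, t0 s, fr s, ss s, l1 s, l2 s, dd s, mk s, ff s)"]) (cases s; simp)+
qed simp
instance cst :: finite by standard (simp add: UNIV_cst)

definition clsE :: "abc \<Rightarrow> cls" where "clsE x = (if x = c then Cc else Bad)"
definition clsS :: "abc \<Rightarrow> cls \<Rightarrow> cls" where
  "clsS x k = (case x of c \<Rightarrow> (if k = Cc then Cc else Bad) | b \<Rightarrow> (if k = Cc \<or> k = Bc then Bc else Bad)
     | a \<Rightarrow> (if k = Bc \<or> k = Ac then Ac else Bad))"
fun clsw :: "abc list \<Rightarrow> cls" where
  "clsw [] = Bad" | "clsw [x] = clsE x" | "clsw (x # y # ys) = clsS x (clsw (y # ys))"

lemma clsw_Cons: "zs \<noteq> [] \<Longrightarrow> clsw (x # zs) = clsS x (clsw zs)"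
  by (cases zs) auto

definition emptym :: msg where "emptym = MS None None False False False False False"

definition msgof :: "cst \<Rightarrow> msg" where
  "msgof s = MS (if t0 s then Some (sy s) else None) (case fr s of FNow k \<Rightarrow> Some k | _ \<Rightarrow> None)
     (ss s = K1) (l1 s = K1) (l2 s = K2) ((dd s = K1 \<and> \<not> mk s) \<or> (dd s = K3 \<and> mk s)) (ff s)"

definition frstep :: "bool \<Rightarrow> msg \<Rightarrow> abc \<Rightarrow> frs \<Rightarrow> frs" where
  "frstep e m x f = (case f of FN \<Rightarrow> (if e then FNow (clsE x) else (case mfr m of Some k \<Rightarrow> FNow (clsS x k) | None \<Rightarrow> FN))
     | FNow k \<Rightarrow> FDn k | FDn k \<Rightarrow> FDn k)"

definition stp :: "bool \<Rightarrow> msg \<Rightarrow> cst \<Rightarrow> cst" where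
  "stp e m s = (let mk' = (mk s \<or> (sy s = a \<and> msy m = Some b) \<or> (mff m \<and> ml1 m)) in
     CS (sy s) False (frstep e m (sy s) (fr s)) (adv (ss s) (mss m)) (adv (l1 s) (ml1 m))
        (adv (l2 s) (ml2 m)) (adv (dd s) (mdd m)) mk' ((ml2 m \<and> mk') \<or> (mff m \<and> \<not> ml1 m)))"

definition init :: "abc \<Rightarrow> cst" where
  "init x = CS x True FN (if x = c then K0 else NY) (if x = b then K0 else NY) (if x = b then K0 else NY)
     (if x = b then K0 else NY) False False"

definition dec :: "abc + nat \<Rightarrow> cst" where "dec s = (case s of Inl x \<Rightarrow> init x | Inr n \<Rightarrow> from_nat n)"
definition encm :: "msg \<Rightarrow> nat option" where "encm m = (if m = emptym then None else Some (to_nat m))"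
definition rdm :: "nat rcv \<Rightarrow> msg" where "rdm r = (case r of Msg n \<Rightarrow> from_nat n | _ \<Rightarrow> emptym)"
definition accq :: "cst \<Rightarrow> bool" where "accq s = (fr s = FNow Ac \<and> ss s = K0 \<and> dd s = K0 \<and> mk s)"

definition MM :: "(abc + nat, nat) ca" where
  "MM = \<lparr>St = range Inl \<union> range (\<lambda>q::cst. Inr (to_nat q)), Acc = (\<lambda>q::cst. Inr (to_nat q)) ` {q. accq q},
     Inp = range Inl, Com = UNIV, bl = (\<lambda>s. encm (msgof (dec s))), br = (\<lambda>s. None),
     dlt = (\<lambda>l s r. Inr (to_nat (stp (r = Bnd) (rdm r) (dec s))))\<rparr>"

definition st :: "(abc + nat) list \<Rightarrow> nat \<Rightarrow> nat \<Rightarrow> cst" where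
  "st w t x = dec (conf True MM w t x)"

lemma dec_Inr[simp]: "dec (Inr (to_nat q)) = q" by (simp add: dec_def)

lemma rdm_enc[simp]: "rdm (to_rcv (encm m)) = m"
  by (simp add: rdm_def to_rcv_def encm_def)

lemma enc_not_Bnd[simp]: "to_rcv (encm m) \<noteq> Bnd"
  by (simp add: to_rcv_def encm_def)

lemma conf_Suc_Inr: "conf True MM w (Suc t) x = Inr (to_nat (st w (Suc t) x))"
  by (simp add: st_def MM_def)

lemma st_Suc: assumes "1 \<le> x" "x \<le> length w"
  shows "st w (Suc t) x = stp (x = length w \<and> t = 0) (if x = length w then emptym else msgof (st w t (Suc x))) (st w t x)"
proof (cases "x = length w")
  case True
  then show ?thesis by (simp add: st_def MM_def rdm_def)
next
  case False
  then show ?thesis by (simp add: st_def MM_def)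
qed

lemma st_0: "1 \<le> x \<Longrightarrow> x \<le> length ws \<Longrightarrow> st (map Inl ws) 0 x = init (ws ! (x - 1))"
  by (simp add: st_def dec_def)

definition frC :: "abc list \<Rightarrow> nat \<Rightarrow> nat \<Rightarrow> frs" where
  "frC ws x t = (if t < Suc (length ws) - x then FN else if t = Suc (length ws) - x
      then FNow (clsw (drop (x-1) ws)) else FDn (clsw (drop (x-1) ws)))"

lemma drop_last1: "1 \<le> x \<Longrightarrow> x = length ws \<Longrightarrow> drop (x-1) ws = [ws!(x-1)]"
proof -
  assume h: "1 \<le> x" "x = length ws"
  then have l: "x - 1 < length ws" by simp
  have "drop (x-1) ws = ws!(x-1) # drop (Suc (x-1)) ws" using l by (rule Cons_nth_drop_Suc[symmetric])
  moreover have "Suc (x-1) = length ws" using h by simp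
  ultimately show ?thesis by simp
qed

lemma drop_cons1: "1 \<le> x \<Longrightarrow> x < length ws \<Longrightarrow> drop (x-1) ws = ws!(x-1) # drop x ws"
proof -
  assume h: "1 \<le> x" "x < length ws"
  then have l: "x - 1 < length ws" by simp
  have "drop (x-1) ws = ws!(x-1) # drop (Suc (x-1)) ws" using l by (rule Cons_nth_drop_Suc[symmetric])
  moreover have "Suc (x-1) = x" using h by simp
  ultimately show ?thesis by simp
qed


lemma stA: assumes w: "w = map Inl ws"
  shows "1 \<le> x \<Longrightarrow> x \<le> length ws \<Longrightarrow>
    sy (st w t x) = ws!(x-1) \<and> t0 (st w t x) = (t=0) \<and> fr (st w t x) = frC ws x t"
proof (induction t arbitrary: x)
  case 0
  then show ?case using w by (simp add: st_0 init_def frC_def)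
next
  case (Suc t)
  have lw: "length w = length ws" using w by simp
  show ?case
  proof (cases "x = length ws")
    case True
    have IH: "sy (st w t x) = ws!(x-1)" "t0 (st w t x) = (t=0)" "fr (st w t x) = frC ws x t"
      using Suc by auto
    have d: "drop (x-1) ws = [ws!(x-1)]" using drop_last1[of x ws] Suc.prems True by simp
    show ?thesis using Suc.prems True IH d
      by (simp add: st_Suc lw stp_def Let_def frstep_def frC_def emptym_def split: frs.splits)
  next
    case False
    then have xl: "x < length ws" using Suc.prems by simp
    have IH: "sy (st w t x) = ws!(x-1)" "t0 (st w t x) = (t=0)" "fr (st w t x) = frC ws x t"
      using Suc by auto
    have IH2: "fr (st w t (Suc x)) = frC ws (Suc x) t" using Suc.IH[of "Suc x"] xl by simp
    have d: "drop (x-1) ws = ws!(x-1) # drop x ws" using drop_cons1[of x ws] Suc.prems xl by simp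
    have ne: "drop x ws \<noteq> []" using xl by simp
    show ?thesis using Suc.prems xl IH IH2 d ne
      by (auto simp: st_Suc lw stp_def Let_def frstep_def frC_def msgof_def clsw_Cons split: frs.splits)
  qed
qed

definition fmt :: "nat \<Rightarrow> nat \<Rightarrow> nat \<Rightarrow> abc list" where
  "fmt p q r = replicate p a @ replicate q b @ replicate r c"

lemma fmt_len[simp]: "length (fmt p q r) = p + q + r" by (simp add: fmt_def)

lemma fmt_nth: "1 \<le> x \<Longrightarrow> x \<le> p+q+r \<Longrightarrow>
   fmt p q r ! (x-1) = (if x \<le> p then a else if x \<le> p+q then b else c)"
  by (auto simp: fmt_def nth_append)

lemma sstT_00[simp]: "sstT (Some T) T = K0" by (simp add: sstT_def)

lemma sstT_0: "0 < T \<Longrightarrow> sstT (Some T) 0 = NY" by (simp add: sstT_def)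

lemma stB: assumes w: "w = map Inl (fmt p q r)" and q: "1 \<le> q" and r: "1 \<le> r"
  shows "1 \<le> x \<Longrightarrow> x \<le> p+q+r \<Longrightarrow>
    ss (st w t x) = sstT (Stm p q x) t \<and> l1 (st w t x) = sstT (L1m p q x) t \<and>
    l2 (st w t x) = sstT (L2m p q x) t \<and> dd (st w t x) = sstT (Dm p q x) t \<and>
    mk (st w t x) = mkC p x t \<and> ff (st w t x) = fC p x t"
proof (induction t arbitrary: x)
  case 0
  have nt: "fmt p q r ! (x-1) = (if x \<le> p then a else if x \<le> p+q then b else c)"
    using fmt_nth 0 by simp
  have "1 \<le> hp (p + 1 - x)" if "x \<le> p"
  proof -
    have "1 \<le> p+1-x" using that by simp
    from hp_pow2[OF this] obtain k where "hp (p+1-x) = 2^k" by (auto simp: pow2_def)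
    then show ?thesis by simp
  qed
  then show ?case using 0 w nt
    by (auto simp: st_0 init_def Stm_def L1m_def L2m_def Dm_def mkC_def fC_def sstT_0)
next
  case (Suc t)
  have lw: "length w = p + q + r" using w by simp
  have IH: "ss (st w t x) = sstT (Stm p q x) t" "l1 (st w t x) = sstT (L1m p q x) t"
    "l2 (st w t x) = sstT (L2m p q x) t" "dd (st w t x) = sstT (Dm p q x) t"
    "mk (st w t x) = mkC p x t" "ff (st w t x) = fC p x t"
    using Suc by auto
  have A: "sy (st w t x) = fmt p q r ! (x-1)" using stA[OF w, of x t] Suc.prems by simp
  have nt: "fmt p q r ! (x-1) = (if x \<le> p then a else if x \<le> p+q then b else c)"
    using fmt_nth Suc.prems by simp
  show ?case
  proof (cases "x = p+q+r")
    case True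
    then have gx: "p + q < x" using r by simp
    have ml: "mkC p x t = mkC p x (Suc t)" "\<not> fC p x (Suc t)" using mk_last[OF gx] ff_last[OF gx] by auto
    show ?thesis using True IH gx ml
      by (simp add: st_Suc lw stp_def Let_def emptym_def ss_last l1_last l2_last dd_last mk_last ff_last
          del: adv.simps)
  next
    case False
    then have xl: "x < p+q+r" using Suc.prems by simp
    define n where "n = st w t (Suc x)"
    have IH2: "ss n = sstT (Stm p q (Suc x)) t" "l1 n = sstT (L1m p q (Suc x)) t"
      "l2 n = sstT (L2m p q (Suc x)) t" "dd n = sstT (Dm p q (Suc x)) t"
      "mk n = mkC p (Suc x) t" "ff n = fC p (Suc x) t"
      using Suc.IH[of "Suc x"] xl n_def by auto
    have A2: "sy n = fmt p q r ! x" "t0 n = (t = 0)" using stA[OF w, of "Suc x" t] xl n_def by auto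
    have nt2: "fmt p q r ! x = (if Suc x \<le> p then a else if Suc x \<le> p+q then b else c)"
      using fmt_nth[of "Suc x" p q r] xl by simp
    have S: "st w (Suc t) x = stp False (msgof n) (st w t x)"
      using st_Suc[of x w t] Suc.prems xl lw n_def by simp
    have mk': "(mk (st w t x) \<or> (sy (st w t x) = a \<and> msy (msgof n) = Some b) \<or>
                (mff (msgof n) \<and> ml1 (msgof n))) = mkC p x (Suc t)"
    proof -
      have "(mk (st w t x) \<or> (sy (st w t x) = a \<and> msy (msgof n) = Some b) \<or>
                (mff (msgof n) \<and> ml1 (msgof n))) =
            (mkC p x t \<or> (x \<le> p \<and> t = 0 \<and> p < Suc x \<and> Suc x \<le> p+q) \<or>
          (fC p (Suc x) t \<and> sstT (L1m p q (Suc x)) t = K1))"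
        using IH A nt A2 nt2 IH2 by (auto simp: msgof_def)
      also have "\<dots> = mkC p x (Suc t)" using mk_step q Suc.prems by blast
      finally show ?thesis .
    qed
    show ?thesis
      unfolding S stp_def Let_def
      using IH IH2 mk' ss_step l1_step[OF q] l2_step[OF q] dd_step[OF q] ff_step[OF q] Suc.prems
      by (simp add: msgof_def del: adv.simps)
  qed
qed

lemma clsw_c: "1 \<le> r \<Longrightarrow> clsw (replicate r c) = Cc"
proof (induction r)
  case 0 then show ?case by simp
next
  case (Suc r) then show ?case by (cases r) (auto simp: clsE_def clsS_def clsw_Cons)
qed

lemma clsw_b: "1 \<le> q \<Longrightarrow> zs \<noteq> [] \<Longrightarrow> clsw zs = Cc \<Longrightarrow> clsw (replicate q b @ zs) = Bc"
proof (induction q)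
  case 0 then show ?case by simp
next
  case (Suc q) then show ?case by (cases q) (auto simp: clsS_def clsw_Cons)
qed

lemma clsw_a: "1 \<le> p \<Longrightarrow> zs \<noteq> [] \<Longrightarrow> clsw zs = Bc \<Longrightarrow> clsw (replicate p a @ zs) = Ac"
proof (induction p)
  case 0 then show ?case by simp
next
  case (Suc p) then show ?case by (cases p) (auto simp: clsS_def clsw_Cons)
qed

lemma clsw_fmt: "1 \<le> p \<Longrightarrow> 1 \<le> q \<Longrightarrow> 1 \<le> r \<Longrightarrow> clsw (fmt p q r) = Ac"
  unfolding fmt_def by (intro clsw_a clsw_b clsw_c) (auto simp: clsw_c clsw_b)

lemma clsw_inv: "(clsw ws = Cc \<longrightarrow> (\<exists>r\<ge>1. ws = replicate r c)) \<and>
  (clsw ws = Bc \<longrightarrow> (\<exists>q\<ge>1. \<exists>r\<ge>1. ws = replicate q b @ replicate r c)) \<and>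
  (clsw ws = Ac \<longrightarrow> (\<exists>p\<ge>1. \<exists>q\<ge>1. \<exists>r\<ge>1. ws = fmt p q r))"
proof (induction ws)
  case Nil then show ?case by simp
next
  case (Cons x zs)
  show ?case
  proof (cases "zs = []")
    case True then show ?thesis by (cases x) (auto simp: clsE_def intro: exI[of _ 1])
  next
    case False
    then have e: "clsw (x # zs) = clsS x (clsw zs)" by (rule clsw_Cons)
    show ?thesis
    proof (cases x)
      case a
      have "clsw (x#zs) = Ac \<Longrightarrow> \<exists>p\<ge>1. \<exists>q\<ge>1. \<exists>r\<ge>1. x # zs = fmt p q r"
      proof -
        assume h: "clsw (x#zs) = Ac"
        then have "clsw zs = Bc \<or> clsw zs = Ac" using e a by (auto simp: clsS_def split: if_splits)
        then show ?thesis
        proof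
          assume "clsw zs = Bc"
          then obtain q r where "q \<ge> 1" "r \<ge> 1" "zs = replicate q b @ replicate r c" using Cons by blast
          then show ?thesis using a by (intro exI[of _ 1] exI[of _ q] exI[of _ r]) (auto simp: fmt_def)
        next
          assume "clsw zs = Ac"
          then obtain p q r where "p \<ge> 1" "q \<ge> 1" "r \<ge> 1" "zs = fmt p q r" using Cons by blast
          then show ?thesis using a by (intro exI[of _ "Suc p"] exI[of _ q] exI[of _ r]) (auto simp: fmt_def)
        qed
      qed
      then show ?thesis using e a by (auto simp: clsS_def split: if_splits)
    next
      case b
      have "clsw (x#zs) = Bc \<Longrightarrow> \<exists>q\<ge>1. \<exists>r\<ge>1. x # zs = replicate q b @ replicate r c"
      proof -
        assume h: "clsw (x#zs) = Bc"
        then have "clsw zs = Cc \<or> clsw zs = Bc" using e b by (auto simp: clsS_def split: if_splits)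
        then show ?thesis
        proof
          assume "clsw zs = Cc"
          then obtain r where "r \<ge> 1" "zs = replicate r c" using Cons by blast
          then show ?thesis using b by (intro exI[of _ 1] exI[of _ r]) auto
        next
          assume "clsw zs = Bc"
          then obtain q r where "q \<ge> 1" "r \<ge> 1" "zs = replicate q b @ replicate r c" using Cons by blast
          then show ?thesis using b by (intro exI[of _ "Suc q"] exI[of _ r]) auto
        qed
      qed
      then show ?thesis using e b by (auto simp: clsS_def split: if_splits)
    next
      case c
      have "clsw (x#zs) = Cc \<Longrightarrow> \<exists>r\<ge>1. x # zs = replicate r c"
      proof -
        assume h: "clsw (x#zs) = Cc"
        then have "clsw zs = Cc" using e c by (auto simp: clsS_def split: if_splits)
        then obtain r where "r \<ge> 1" "zs = replicate r c" using Cons by blast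
        then show ?thesis using c by (intro exI[of _ "Suc r"]) auto
      qed
      then show ?thesis using e c by (auto simp: clsS_def split: if_splits)
    qed
  qed
qed

lemma acc_iff: assumes "w = map Inl ws" "ws \<noteq> []"
  shows "(conf True MM w t (Suc 0) \<in> Acc MM) = (t \<noteq> 0 \<and> accq (st w t 1))"
proof (cases t)
  case 0 then show ?thesis using assms by (auto simp: MM_def)
next
  case (Suc t')
  have "inj (to_nat :: cst \<Rightarrow> nat)" by simp
  then show ?thesis using Suc conf_Suc_Inr[of w t' 1]
    by (auto simp: MM_def dest: injD)
qed

lemma Dm1: "1 \<le> p \<Longrightarrow> Dm p q 1 = Some (2*p + 2*cnt p)" by (simp add: Dm_def)
lemma Stm1: "1 \<le> p \<Longrightarrow> Stm p q 1 = Some (2*(p+q))" by (simp add: Stm_def)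

lemma sound: assumes w: "w = map Inl ws" and ne: "ws \<noteq> []" and acc: "accq (st w t 1)"
  shows "ws \<in> L2 \<and> t = length ws"
proof -
  have fr1: "fr (st w t 1) = frC ws 1 t" using stA[OF w, of 1 t] ne by (simp add: Suc_le_eq)
  then have "frC ws 1 t = FNow Ac" using acc by (simp add: accq_def)
  then have t: "t = length ws" and cl: "clsw ws = Ac" by (auto simp: frC_def split: if_splits)
  then obtain p q r where pqr: "p \<ge> 1" "q \<ge> 1" "r \<ge> 1" "ws = fmt p q r" using clsw_inv by blast
  have w2: "w = map Inl (fmt p q r)" using w pqr by simp
  have B: "ss (st w t 1) = sstT (Stm p q 1) t" "dd (st w t 1) = sstT (Dm p q 1) t" "mk (st w t 1) = mkC p 1 t"
    using stB[OF w2 pqr(2,3), of 1 t] pqr by auto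
  have e1: "t = 2*(p+q)" using B(1) acc Stm1[OF pqr(1)] by (simp add: accq_def)
  have e2: "t = 2*p + 2*cnt p" using B(2) acc Dm1[OF pqr(1)] by (simp add: accq_def)
  have "pow2 p" using B(3) acc by (simp add: accq_def mkC_def)
  then obtain k where k: "p = 2^k" by (auto simp: pow2_def)
  have qk: "q = k" using e1 e2 k cnt_pow by simp
  have rr: "r = p + q" using e1 t pqr(4) by simp
  have "ws = replicate (2^q) a @ replicate q b @ replicate (2^q + q) c"
    using pqr(4) k qk rr by (simp add: fmt_def)
  then show ?thesis using pqr(2) t unfolding L2_def by blast
qed

lemma complete: assumes n: "1 \<le> n" and ws: "ws = fmt (2^n) n (2^n+n)" and w: "w = map Inl ws"
  shows "accq (st w (length ws) 1)"
proof -
  define p where "p = (2::nat)^n"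
  have "(2::nat)^1 \<le> 2^n" using n by (intro power_increasing) auto
  then have p2: "2 \<le> p" using p_def by simp
  have w2: "w = map Inl (fmt p n (p+n))" using w ws p_def by simp
  have len: "length ws = 2*(p+n)" using ws p_def by simp
  have fr1: "fr (st w (length ws) 1) = frC ws 1 (length ws)" using stA[OF w, of 1 "length ws"] len p2 by simp
  have cl: "clsw ws = Ac" using ws clsw_fmt n by simp
  have B: "ss (st w (length ws) 1) = sstT (Stm p n 1) (length ws)" "dd (st w (length ws) 1) = sstT (Dm p n 1) (length ws)"
    "mk (st w (length ws) 1) = mkC p 1 (length ws)"
    using stB[OF w2, of 1 "length ws"] n p2 len by auto
  have cp: "cnt p = n" using cnt_pow p_def by simp
  have pw: "pow2 p" using p_def pow2_def by blast
  have s1: "Stm p n (Suc 0) = Some (2*(p+n))" "Dm p n (Suc 0) = Some (2*p + 2*cnt p)"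
    using p2 by (auto simp: Stm_def Dm_def)
  show ?thesis unfolding accq_def using fr1 cl B len p2 cp pw s1
    by (simp add: frC_def mkC_def)
qed

lemma sstT_K1': "sstT T j = K1 \<Longrightarrow> j = Suc (the T)" by (cases T) auto
lemma sstT_K2': "sstT T j = K2 \<Longrightarrow> j = Suc (Suc (the T))" by (cases T) auto
lemma sstT_K3': "sstT T j = K3 \<Longrightarrow> j = Suc (Suc (Suc (the T)))" by (cases T) auto

lemma msg_ne: "msgof s \<noteq> emptym \<Longrightarrow> t0 s \<or> (\<exists>k. fr s = FNow k) \<or> ss s = K1 \<or> l1 s = K1 \<or>
       l2 s = K2 \<or> dd s = K1 \<or> dd s = K3 \<or> ff s"
  by (cases "fr s") (auto simp: msgof_def emptym_def)

lemma com_bound: assumes w: "w = map Inl (fmt p q r)" and q: "1 \<le> q" and r: "1 \<le> r"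
  and i: "1 \<le> i" "i < length w"
  shows "com True MM w i T \<le> 8"
proof -
  define y where "y = Suc i"
  define N where "N = p + q + r"
  have y: "1 \<le> y" "y \<le> N" using i w y_def N_def by auto
  define L where "L = [0, Suc N - y, Suc (the (Stm p q y)), Suc (the (L1m p q y)),
     Suc (Suc (the (L2m p q y))), 2 * hp (p+1-y) + (p+1-y), Suc (the (Dm p q y)), Suc (Suc (Suc (the (Dm p q y))))]"
  have sub: "{j. j < T \<and> (br MM (conf True MM w j i) \<noteq> None \<or> bl MM (conf True MM w j (i + 1)) \<noteq> None)} \<subseteq> set L"
  proof
    fix j assume "j \<in> {j. j < T \<and> (br MM (conf True MM w j i) \<noteq> None \<or> bl MM (conf True MM w j (i + 1)) \<noteq> None)}"
    then have "encm (msgof (st w j y)) \<noteq> None" by (simp add: MM_def st_def y_def)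
    then have ne: "msgof (st w j y) \<noteq> emptym" by (simp add: encm_def split: if_splits)
    have A: "t0 (st w j y) = (j = 0)" "fr (st w j y) = frC (fmt p q r) y j"
      using stA[OF w, of y j] y N_def by auto
    have B: "ss (st w j y) = sstT (Stm p q y) j" "l1 (st w j y) = sstT (L1m p q y) j"
      "l2 (st w j y) = sstT (L2m p q y) j" "dd (st w j y) = sstT (Dm p q y) j" "ff (st w j y) = fC p y j"
      using stB[OF w q r, of y j] y N_def by auto
    have "t0 (st w j y) \<or> (\<exists>k. fr (st w j y) = FNow k) \<or> ss (st w j y) = K1 \<or> l1 (st w j y) = K1 \<or>
       l2 (st w j y) = K2 \<or> dd (st w j y) = K1 \<or> dd (st w j y) = K3 \<or> ff (st w j y)"
      using ne by (rule msg_ne)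
    then show "j \<in> set L"
    proof (elim disjE)
      assume "t0 (st w j y)" then have "j = 0" using A(1) by simp
      then show ?thesis by (simp add: L_def)
    next
      assume h: "\<exists>k. fr (st w j y) = FNow k"
      have "j = Suc N - y" using h A(2) N_def by (auto simp: frC_def split: if_splits)
      then show ?thesis by (simp add: L_def)
    next
      assume h: "ss (st w j y) = K1" have "j = Suc (the (Stm p q y))" by (rule sstT_K1') (use B(1) h in simp)
      then show ?thesis by (simp add: L_def)
    next
      assume h: "l1 (st w j y) = K1" have "j = Suc (the (L1m p q y))" by (rule sstT_K1') (use B(2) h in simp)
      then show ?thesis by (simp add: L_def)
    next
      assume h: "l2 (st w j y) = K2" have "j = Suc (Suc (the (L2m p q y)))" by (rule sstT_K2') (use B(3) h in simp)
      then show ?thesis by (simp add: L_def)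
    next
      assume h: "dd (st w j y) = K1" have "j = Suc (the (Dm p q y))" by (rule sstT_K1') (use B(4) h in simp)
      then show ?thesis by (simp add: L_def)
    next
      assume h: "dd (st w j y) = K3" have "j = Suc (Suc (Suc (the (Dm p q y))))" by (rule sstT_K3') (use B(4) h in simp)
      then show ?thesis by (simp add: L_def)
    next
      assume "ff (st w j y)" then have "j = 2 * hp (p+1-y) + (p+1-y)" using B(5) by (simp add: fC_def)
      then show ?thesis by (simp add: L_def)
    qed
  qed
  have "com True MM w i T \<le> card (set L)"
    unfolding com_def by (rule card_mono[OF _ sub]) simp
  also have "\<dots> \<le> length L" by (rule card_length)
  also have "\<dots> = 8" by (simp add: L_def)
  finally show ?thesis .
qed

lemma finite_St: "finite (St MM)"
proof -
  have "finite (range (Inl :: abc \<Rightarrow> abc + nat))" by simp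
  moreover have "finite (range (\<lambda>q::cst. (Inr (to_nat q) :: abc + nat)))" by simp
  ultimately show ?thesis by (simp add: MM_def)
qed

lemma oca: "is_oca MM"
  unfolding is_oca_def wf_ca_def using finite_St by (auto simp: MM_def)

lemma projl_map: "set w \<subseteq> range Inl \<Longrightarrow> w = map Inl (map projl w)"
  by (induction w) auto

lemma bigo8: "(\<lambda>_. 8::real) \<in> O(\<lambda>_. 1)" by (rule bigo_const)

theorem mainTheorem2:
  shows "\<exists>M :: (abc + nat, nat) ca. rt_mc_oca_const M (map Inl ` L2) \<and> Inp M = range Inl"
proof (intro exI[of _ MM] conjI)
  show "Inp MM = range Inl" by (simp add: MM_def)
  have L2fmt: "\<And>u. u \<in> L2 \<Longrightarrow> \<exists>n\<ge>1. u = fmt (2^n) n (2^n+n)" unfolding L2_def fmt_def by blast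
  have acc_L: "\<And>u. u \<in> L2 \<Longrightarrow> conf True MM (map Inl u) (length u) (Suc 0) \<in> Acc MM"
  proof -
    fix u assume "u \<in> L2"
    then obtain n where n: "n \<ge> 1" "u = fmt (2^n) n (2^n+n)" using L2fmt by blast
    then have ne: "u \<noteq> []" by (simp add: fmt_def)
    have "accq (st (map Inl u) (length u) 1)" using complete[OF n(1) n(2)] by simp
    then show "conf True MM (map Inl u) (length u) (Suc 0) \<in> Acc MM" using acc_iff[of "map Inl u" u] ne by simp
  qed
  have lang: "lang True MM = map Inl ` L2"
  proof
    show "lang True MM \<subseteq> map Inl ` L2"
    proof
      fix w :: "(abc + nat) list" assume "w \<in> lang True MM"
      then have w: "w \<noteq> []" "set w \<subseteq> range Inl" "\<exists>t. conf True MM w t 1 \<in> Acc MM"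
        by (auto simp: lang_def MM_def)
      define ws where "ws = map projl w"
      have ww: "w = map Inl ws" using projl_map w(2) ws_def by blast
      have ne: "ws \<noteq> []" using w(1) ws_def by simp
      obtain t where "conf True MM w t 1 \<in> Acc MM" using w by blast
      then have "accq (st w t 1)" using acc_iff[OF ww ne] by simp
      then have "ws \<in> L2" using sound[OF ww ne] by simp
      then show "w \<in> map Inl ` L2" using ww by blast
    qed
  next
    show "map Inl ` L2 \<subseteq> lang True MM"
    proof
      fix w :: "(abc + nat) list" assume "w \<in> map Inl ` L2"
      then obtain u where u: "u \<in> L2" "w = map Inl u" by blast
      then have ne: "u \<noteq> []" using L2fmt by (fastforce simp: fmt_def)
      show "w \<in> lang True MM" using acc_L[OF u(1)] u ne by (auto simp: lang_def MM_def)
    qed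
  qed
  show "rt_mc_oca_const MM (map Inl ` L2)"
    unfolding rt_mc_oca_const_def
  proof (intro conjI oca lang ballI exI[of _ "\<lambda>_. 8"])
    fix w :: "(abc + nat) list" assume "w \<in> map Inl ` L2"
    then obtain u where u: "u \<in> L2" "w = map Inl u" by blast
    then have ne: "u \<noteq> []" using L2fmt by (fastforce simp: fmt_def)
    show "accepts_within True MM w (length w)"
      unfolding accepts_within_def using acc_L[OF u(1)] u ne by (auto simp: MM_def)
  next
    show "(\<lambda>_. 8::real) \<in> O(\<lambda>_. 1)" by (rule bigo8)
  next
    fix w :: "(abc + nat) list" and i assume "w \<in> map Inl ` L2" and i: "i \<in> {1..<length w}"
    then obtain u where u: "u \<in> L2" "w = map Inl u" by blast
    then obtain n where n: "n \<ge> 1" "u = fmt (2^n) n (2^n+n)" using L2fmt by blast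
    have "com True MM w i (length w) \<le> 8"
      by (rule com_bound[of w "2^n" n "2^n+n"]) (use u n i in auto)
    then show "real (com True MM w i (length w)) \<le> 8" by simp
  qed
qed

end
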